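(* Let $(X,d,\nu)$ be a metric measure space with $\nu$ doubling and supporting a local 1-Poincaré inequality, satisfying the standing assumptions below, and let $\Omega\subset X$ be a bounded $\nu$-measurable set with $0<\nu(\Omega)<\nu(X)$. Let $\psi\in BV(X,d,\nu)\cap L^\infty(X,\nu)$. For each $\varepsilon>0$ let $u_\varepsilon\in BV_{m^{\nu,\varepsilon}}(X)$ be a solution of the nonlocal least gradient problem for the boundary datum $\psi$, i.e. $u_\varepsilon=\psi$ $\nu$-a.e. on $X\setminus\Omega$ and $TV_{m^{\nu,\varepsilon}}(u_\varepsilon)\le TV_{m^{\nu,\varepsilon}}(v)$ for every $v\in BV_{m^{\nu,\varepsilon}}(X)$ with $v=\psi$ $\nu$-a.e. on $X\setminus\Omega$. Then there exist a constant $M\in[0,\infty)$ and a sequence $\varepsilon_k\to0$ such that for all $k$ $$\int_X \frac{1}{\nu(B(x,\varepsilon_k))}\int_{B(x,\varepsilon_k)}|u_{\varepsilon_k}(y)-u_{\varepsilon_k}(x)|\,d\nu(y)\,d\nu(x)\le M\varepsilon_k .$$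
   Context: $\nu$ is doubling if there is $C_d\ge1$ with $0<\nu(B(x,2r))\le C_d\,\nu(B(x,r))<\infty$ for all $x\in X$, $r>0$. For $u:X\to\mathbb{R}$, its slope is $|\nabla u|(x):=\limsup_{y\to x}|u(y)-u(x)|/d(x,y)$ (and $0$ at isolated points). $(X,d,\nu)$ supports a local 1-Poincaré inequality if there are $c>0$, $\lambda\ge1$ such that for every Lipschitz $u$ and every ball, $\int_{B(x,r)}|u-u_{B(x,r)}|\,d\nu\le c\,r\int_{B(x,\lambda r)}|\nabla u|\,d\nu$, where $u_{B}$ is the $\nu$-average of $u$ over $B$. $BV(X,d,\nu)$ is the set of $u\in L^1(X,\nu)$ for which there exist locally Lipschitz $u_n\to u$ in $L^1(X,\nu)$ with $\sup_n\int_X|\nabla u_n|\,d\nu<\infty$. The $\varepsilon$-step random walk is $m^{\nu,\varepsilon}_x:=\nu\llcorner B(x,\varepsilon)/\nu(B(x,\varepsilon))$; $\nu$ is invariant and reversible for it. $BV_{m}(X)$ is the set of $\nu$-measurable $u$ with $\int_X\int_X|u(y)-u(x)|\,dm_x(y)\,d\nu(x)<\infty$ and $TV_m(u):=\frac12\int_X\int_X|u(y)-u(x)|\,dm_x(y)\,d\nu(x)$. Standing assumptions: $(X,d)$ is Polish, $\nu(X)<\infty$, and $\nu$ is ergodic for $m^{\nu,\varepsilon}$. *)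

theory Defs
  imports "HOL-Analysis.Analysis" "HOL-Library.Liminf_Limsup"
begin

definition doubling_measure :: "'a::metric_space measure \<Rightarrow> bool" where
  "doubling_measure nu \<longleftrightarrow> (\<exists>Cd\<ge>1. \<forall>x r. r > 0 \<longrightarrow>
      0 < emeasure nu (ball x (2*r)) \<and>
      emeasure nu (ball x (2*r)) \<le> ennreal Cd * emeasure nu (ball x r) \<and>
      emeasure nu (ball x r) < \<infinity>)"

definition slope :: "('a::metric_space \<Rightarrow> real) \<Rightarrow> 'a \<Rightarrow> ennreal" where
  "slope u x = (if at x = bot then 0
     else Limsup (at x) (\<lambda>y. ennreal (\<bar>u y - u x\<bar> / dist y x)))"

definition locally_lipschitz :: "('a::metric_space \<Rightarrow> real) \<Rightarrow> bool" where
  "locally_lipschitz u \<longleftrightarrow> (\<forall>x. \<exists>r>0. \<exists>L. L-lipschitz_on (ball x r) u)"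

definition avg :: "'a measure \<Rightarrow> 'a set \<Rightarrow> ('a \<Rightarrow> real) \<Rightarrow> real" where
  "avg nu B u = (\<integral>y\<in>B. u y \<partial>nu) / measure nu B"

definition poincare_1 :: "'a::metric_space measure \<Rightarrow> bool" where
  "poincare_1 nu \<longleftrightarrow> (\<exists>c>0. \<exists>lam\<ge>1. \<forall>u x r. (\<exists>L. L-lipschitz_on UNIV u) \<longrightarrow> r > 0 \<longrightarrow>
      (\<integral>\<^sup>+ y\<in>ball x r. ennreal \<bar>u y - avg nu (ball x r) u\<bar> \<partial>nu)
        \<le> ennreal (c * r) * (\<integral>\<^sup>+ y\<in>ball x (lam * r). slope u y \<partial>nu))"

definition BV_metric :: "'a::metric_space measure \<Rightarrow> ('a \<Rightarrow> real) set" where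
  "BV_metric nu = {u. integrable nu u \<and>
      (\<exists>un :: nat \<Rightarrow> 'a \<Rightarrow> real. (\<forall>n. locally_lipschitz (un n)) \<and>
         (\<lambda>n. \<integral>\<^sup>+ x. ennreal \<bar>un n x - u x\<bar> \<partial>nu) \<longlonglongrightarrow> 0 \<and>
         (SUP n. \<integral>\<^sup>+ x. slope (un n) x \<partial>nu) < \<infinity>)}"

definition Linfty :: "'a measure \<Rightarrow> ('a \<Rightarrow> real) set" where
  "Linfty nu = {u. u \<in> borel_measurable nu \<and> (\<exists>C. AE x in nu. \<bar>u x\<bar> \<le> C)}"

definition rw_prob :: "'a::metric_space measure \<Rightarrow> real \<Rightarrow> 'a \<Rightarrow> 'a set \<Rightarrow> ennreal" where
  "rw_prob nu eps x A = emeasure nu (A \<inter> ball x eps) / emeasure nu (ball x eps)"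

definition nl_energy :: "'a::metric_space measure \<Rightarrow> real \<Rightarrow> ('a \<Rightarrow> real) \<Rightarrow> ennreal" where
  "nl_energy nu eps u = (\<integral>\<^sup>+ x. (1 / emeasure nu (ball x eps)) *
       (\<integral>\<^sup>+ y\<in>ball x eps. ennreal \<bar>u y - u x\<bar> \<partial>nu) \<partial>nu)"

definition BV_rw :: "'a::metric_space measure \<Rightarrow> real \<Rightarrow> ('a \<Rightarrow> real) set" where
  "BV_rw nu eps = {u. u \<in> borel_measurable nu \<and> nl_energy nu eps u < \<infinity>}"

definition TV_rw :: "'a::metric_space measure \<Rightarrow> real \<Rightarrow> ('a \<Rightarrow> real) \<Rightarrow> ennreal" where
  "TV_rw nu eps u = nl_energy nu eps u / 2"

definition rw_invariant_set :: "'a::metric_space measure \<Rightarrow> real \<Rightarrow> 'a set \<Rightarrow> bool" where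
  "rw_invariant_set nu eps B \<longleftrightarrow> B \<in> sets nu \<and> (\<forall>x\<in>B. rw_prob nu eps x B = 1)"

definition rw_ergodic :: "'a::metric_space measure \<Rightarrow> real \<Rightarrow> bool" where
  "rw_ergodic nu eps \<longleftrightarrow> (\<forall>B. rw_invariant_set nu eps B \<longrightarrow>
      emeasure nu B = 0 \<or> emeasure nu (space nu - B) = 0)"

definition nl_least_gradient :: "'a::metric_space measure \<Rightarrow> real \<Rightarrow> 'a set \<Rightarrow> ('a \<Rightarrow> real) \<Rightarrow> ('a \<Rightarrow> real) \<Rightarrow> bool" where
  "nl_least_gradient nu eps \<Omega> psi u \<longleftrightarrow> u \<in> BV_rw nu eps \<and> (AE x in nu. x \<notin> \<Omega> \<longrightarrow> u x = psi x) \<and>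
     (\<forall>v \<in> BV_rw nu eps. (AE x in nu. x \<notin> \<Omega> \<longrightarrow> v x = psi x) \<longrightarrow> TV_rw nu eps u \<le> TV_rw nu eps v)"

end

theory Submission imports Defs begin

lemma mcshane:
  fixes u :: "'a::metric_space \<Rightarrow> real"
  assumes L: "L-lipschitz_on K u" and K: "K \<noteq> {}" and bb: "bdd_below (u ` K)"
  shows "\<exists>v. L-lipschitz_on UNIV v \<and> (\<forall>x\<in>K. v x = u x)"
proof -
  have L0: "0 \<le> L" using lipschitz_on_nonneg[OF L] .
  obtain b where b: "\<And>w. w \<in> K \<Longrightarrow> b \<le> u w" using bb by (auto simp: bdd_below_def)
  define v where "v y = (INF w\<in>K. u w + L * dist y w)" for y
  have bdd: "bdd_below ((\<lambda>w. u w + L * dist y w) ` K)" for y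
    by (rule bdd_belowI2[where m=b]) (use b L0 in \<open>auto intro!: add_increasing2\<close>)
  have low: "v y \<le> u w + L * dist y w" if "w \<in> K" for y w
    unfolding v_def by (rule cInf_lower) (use that bdd in auto)
  have vle: "v y1 \<le> v y2 + L * dist y1 y2" for y1 y2
  proof -
    have "v y1 - L * dist y1 y2 \<le> v y2" unfolding v_def[of y2]
    proof (rule cINF_greatest[OF K])
      fix w assume w: "w \<in> K"
      have "v y1 \<le> u w + L * dist y1 w" by (rule low[OF w])
      also have "dist y1 w \<le> dist y1 y2 + dist y2 w" by (rule dist_triangle)
      finally show "v y1 - L * dist y1 y2 \<le> u w + L * dist y2 w"
        using L0 by (smt (verit, ccfv_SIG) mult_left_mono distrib_left)
    qed
    then show ?thesis by simp
  qed
  have "L-lipschitz_on UNIV v"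
  proof (rule lipschitz_onI[OF _ L0])
    fix x y :: 'a
    show "dist (v x) (v y) \<le> L * dist x y"
      using vle[of x y] vle[of y x] by (simp add: dist_real_def dist_commute abs_le_iff)
  qed
  moreover have "v x = u x" if x: "x \<in> K" for x
  proof (rule antisym)
    show "v x \<le> u x" using low[OF x, of x] by simp
    show "u x \<le> v x" unfolding v_def
    proof (rule cINF_greatest[OF K])
      fix w assume w: "w \<in> K"
      have "dist (u x) (u w) \<le> L * dist x w" by (rule lipschitz_onD[OF L x w])
      then show "u x \<le> u w + L * dist x w" by (simp add: dist_real_def abs_le_iff)
    qed
  qed
  ultimately show ?thesis by blast
qed

lemma slope_local:
  assumes "open U" "y \<in> U" "\<And>z. z \<in> U \<Longrightarrow> v z = u z"
  shows "slope v y = slope u y"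
proof -
  have "eventually (\<lambda>z. z \<in> U) (at y)" by (rule eventually_at_in_open'[OF assms(1,2)])
  then have "eventually (\<lambda>z. ennreal (\<bar>v z - v y\<bar> / dist z y) = ennreal (\<bar>u z - u y\<bar> / dist z y)) (at y)"
    by eventually_elim (use assms in auto)
  then show ?thesis unfolding slope_def by (simp add: Limsup_eq)
qed

lemma envelope:
  fixes s :: "'b \<Rightarrow> ennreal"
  assumes fin: "integral\<^sup>N M s < \<infinity>"
  obtains g where "g \<in> borel_measurable M" "\<And>x. g x \<le> s x"
    "\<And>B. B \<in> sets M \<Longrightarrow> (\<integral>\<^sup>+x\<in>B. s x \<partial>M) \<le> (\<integral>\<^sup>+x\<in>B. g x \<partial>M)"
proof -
  define A where "A = {g. simple_function M g \<and> g \<le> s}"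
  have A0: "(\<lambda>_. 0) \<in> A" unfolding A_def by (auto simp: le_fun_def)
  then have "A \<noteq> {}" by auto
  from ennreal_SUP_countable_SUP[OF this, of "integral\<^sup>S M"]
  obtain f :: "nat \<Rightarrow> ennreal" where f: "range f \<subseteq> integral\<^sup>S M ` A" "Sup (integral\<^sup>S M ` A) = Sup (range f)" by blast
  have "\<forall>n. \<exists>g\<in>A. f n = integral\<^sup>S M g" using f(1) by blast
  then obtain gs where gs: "\<And>n. gs n \<in> A" "\<And>n. f n = integral\<^sup>S M (gs n)" by metis
  have gs_s: "\<And>n. simple_function M (gs n)" and gs_le: "\<And>n x. gs n x \<le> s x"
    using gs(1) unfolding A_def by (auto simp: le_fun_def)
  define G where "G x = (SUP n::nat. gs n x)" for x
  have Gm: "G \<in> borel_measurable M" unfolding G_def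
    using gs_s by (intro borel_measurable_SUP) (auto intro: borel_measurable_simple_function)
  have Gs: "G x \<le> s x" for x unfolding G_def by (rule SUP_least) (rule gs_le)
  have int_s: "integral\<^sup>N M s = Sup (integral\<^sup>S M ` A)" unfolding nn_integral_def A_def by simp
  have "integral\<^sup>N M s \<le> integral\<^sup>N M G"
  proof -
    have "integral\<^sup>N M s = (SUP n. f n)" using int_s f(2) by simp
    also have "\<dots> \<le> integral\<^sup>N M G"
    proof (rule SUP_least)
      fix n
      have "f n = integral\<^sup>N M (gs n)" using gs(2) nn_integral_eq_simple_integral[OF gs_s] by simp
      also have "\<dots> \<le> integral\<^sup>N M G" by (rule nn_integral_mono) (auto simp: G_def intro: SUP_upper)
      finally show "f n \<le> integral\<^sup>N M G" .
    qed
    finally show ?thesis .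
  qed
  moreover have "integral\<^sup>N M G \<le> integral\<^sup>N M s" by (rule nn_integral_mono) (rule Gs)
  ultimately have GS: "integral\<^sup>N M G = integral\<^sup>N M s" by (rule antisym[rotated])
  have main: "(\<integral>\<^sup>+x\<in>B. s x \<partial>M) \<le> (\<integral>\<^sup>+x\<in>B. G x \<partial>M)" if B: "B \<in> sets M" for B
  proof -
    have "(\<integral>\<^sup>+x\<in>B. s x \<partial>M) = Sup (integral\<^sup>S M ` {h. simple_function M h \<and> h \<le> (\<lambda>x. s x * indicator B x)})"
      unfolding nn_integral_def by simp
    also have "\<dots> \<le> (\<integral>\<^sup>+x\<in>B. G x \<partial>M)"
    proof (rule Sup_least, clarify)
      fix h assume h: "simple_function M h" "h \<le> (\<lambda>x. s x * indicator B x)"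
      define H where "H x = max (G x) (h x)" for x
      have Hm: "H \<in> borel_measurable M" unfolding H_def
        using Gm borel_measurable_simple_function[OF h(1)] by measurable
      have hB': "h x \<le> s x * indicator B x" for x using h(2) by (auto simp: le_fun_def)
      have hB: "h x \<le> (if x \<in> B then s x else 0)" for x using hB'[of x] by (cases "x \<in> B") auto
      have Hs: "H x \<le> s x" for x unfolding H_def using Gs[of x] hB[of x]
        by (auto simp: indicator_def split: if_splits)
      have "integral\<^sup>N M H \<le> integral\<^sup>N M G" unfolding GS by (rule nn_integral_mono) (rule Hs)
      have split: "integral\<^sup>N M F = (\<integral>\<^sup>+x\<in>B. F x \<partial>M) + (\<integral>\<^sup>+x\<in>space M - B. F x \<partial>M)"
        if "F \<in> borel_measurable M" for F :: "'b \<Rightarrow> ennreal"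
      proof -
        have "integral\<^sup>N M F = (\<integral>\<^sup>+x. F x * indicator B x + F x * indicator (space M - B) x \<partial>M)"
          by (intro nn_integral_cong) (auto simp: indicator_def)
        also have "\<dots> = (\<integral>\<^sup>+x\<in>B. F x \<partial>M) + (\<integral>\<^sup>+x\<in>space M - B. F x \<partial>M)"
          using that B by (intro nn_integral_add) auto
        finally show ?thesis .
      qed
      have c1: "(\<integral>\<^sup>+x\<in>space M - B. G x \<partial>M) \<le> (\<integral>\<^sup>+x\<in>space M - B. H x \<partial>M)"
        by (intro nn_integral_mono) (auto simp: H_def indicator_def)
      have fin2: "(\<integral>\<^sup>+x\<in>space M - B. G x \<partial>M) \<noteq> \<infinity>"
      proof -
        have "(\<integral>\<^sup>+x\<in>space M - B. G x \<partial>M) \<le> integral\<^sup>N M G"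
          by (intro nn_integral_mono) (auto simp: indicator_def)
        then show ?thesis using fin GS by auto
      qed
      have "(\<integral>\<^sup>+x\<in>space M - B. G x \<partial>M) + (\<integral>\<^sup>+x\<in>B. H x \<partial>M) \<le>
            (\<integral>\<^sup>+x\<in>space M - B. G x \<partial>M) + (\<integral>\<^sup>+x\<in>B. G x \<partial>M)"
      proof -
        have "(\<integral>\<^sup>+x\<in>space M - B. G x \<partial>M) + (\<integral>\<^sup>+x\<in>B. H x \<partial>M) \<le>
              (\<integral>\<^sup>+x\<in>space M - B. H x \<partial>M) + (\<integral>\<^sup>+x\<in>B. H x \<partial>M)"
          using c1 by (rule add_right_mono)
        also have "\<dots> = integral\<^sup>N M H" using split[OF Hm] by (simp add: add.commute)
        also have "\<dots> \<le> integral\<^sup>N M G" by fact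
        also have "\<dots> = (\<integral>\<^sup>+x\<in>space M - B. G x \<partial>M) + (\<integral>\<^sup>+x\<in>B. G x \<partial>M)"
          using split[OF Gm] by (simp add: add.commute)
        finally show ?thesis .
      qed
      then have HG: "(\<integral>\<^sup>+x\<in>B. H x \<partial>M) \<le> (\<integral>\<^sup>+x\<in>B. G x \<partial>M)"
        using fin2 by (simp add: ennreal_add_left_cancel_le)
      have "integral\<^sup>S M h = integral\<^sup>N M h" using nn_integral_eq_simple_integral[OF h(1)] by simp
      also have "\<dots> \<le> (\<integral>\<^sup>+x\<in>B. H x \<partial>M)"
      proof (intro nn_integral_mono)
        fix x show "h x \<le> H x * indicator B x"
          using hB[of x] by (cases "x \<in> B") (auto simp: H_def)
      qed
      also have "\<dots> \<le> (\<integral>\<^sup>+x\<in>B. G x \<partial>M)" by (rule HG)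
      finally show "integral\<^sup>S M h \<le> (\<integral>\<^sup>+x\<in>B. G x \<partial>M)" .
    qed
    finally show ?thesis .
  qed
  show ?thesis using that[OF Gm Gs main] .
qed

locale dm = finite_measure nu for nu :: "'a::polish_space measure" +
  fixes C :: real
  assumes sets_nu: "sets nu = sets borel"
    and C1: "C \<ge> 1"
    and pos: "r > 0 \<Longrightarrow> 0 < emeasure nu (ball x r)"
    and dbl: "r > 0 \<Longrightarrow> emeasure nu (ball x (2*r)) \<le> ennreal C * emeasure nu (ball x r)"
begin

definition m :: "'a \<Rightarrow> real \<Rightarrow> real" where "m x r = measure nu (ball x r)"

lemma space_nu[simp]: "space nu = UNIV"
  using sets_eq_imp_space_eq[OF sets_nu] by simp

lemma open_sets: "open S \<Longrightarrow> S \<in> sets nu"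
  using sets_nu by auto

lemma ball_sets[measurable, simp]: "ball x r \<in> sets nu"
  by (rule open_sets) simp

lemma emeasure_ball: "emeasure nu (ball x r) = ennreal (m x r)"
  unfolding m_def by (simp add: emeasure_eq_measure)

lemma m_nonneg: "0 \<le> m x r" unfolding m_def by simp

lemma m_pos: "r > 0 \<Longrightarrow> 0 < m x r"
  using pos[of r x] unfolding emeasure_ball by (simp add: m_nonneg)

lemma m_dbl: "r > 0 \<Longrightarrow> m x (2*r) \<le> C * m x r"
  using dbl[of r x] C1 unfolding emeasure_ball
  by (simp add: ennreal_mult'[symmetric] m_nonneg ennreal_le_iff)

lemma m_mono: "r \<le> s \<Longrightarrow> m x r \<le> m x s"
  unfolding m_def by (rule finite_measure_mono) auto

lemma m_iter: "r > 0 \<Longrightarrow> m x (2^k * r) \<le> C^k * m x r"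
proof (induction k)
  case 0 then show ?case by simp
next
  case (Suc k)
  have "m x (2^Suc k * r) = m x (2 * (2^k * r))" by (simp add: mult.assoc)
  also have "\<dots> \<le> C * m x (2^k*r)" by (rule m_dbl) (use Suc in simp)
  also have "\<dots> \<le> C * (C^k * m x r)" by (rule mult_left_mono[OF Suc.IH]) (use Suc C1 in auto)
  finally show ?case by (simp add: mult.assoc)
qed

lemma m_cmp: "r > 0 \<Longrightarrow> s \<le> 2^k * r \<Longrightarrow> m x s \<le> C^k * m x r"
  using m_mono[of s "2^k*r" x] m_iter[of r x k] by linarith

lemma m_shift: assumes "dist x y \<le> t" shows "m y s \<le> m x (s + t)"
  unfolding m_def
proof (rule finite_measure_mono)
  show "ball y s \<subseteq> ball x (s + t)"
  proof
    fix w assume "w \<in> ball y s"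
    then have "dist y w < s" by simp
    moreover have "dist x w \<le> dist x y + dist y w" by (rule dist_triangle)
    ultimately show "w \<in> ball x (s + t)" using assms by simp
  qed
qed simp

lemma meas_nu: "f \<in> borel_measurable borel \<Longrightarrow> f \<in> borel_measurable nu"
  unfolding measurable_cong_sets[OF sets_nu refl, of borel] .

lemma sets_prod: "sets (nu \<Otimes>\<^sub>M nu) = sets (borel :: ('a \<times> 'a) measure)"
proof -
  have "sets (nu \<Otimes>\<^sub>M nu) = sets (borel \<Otimes>\<^sub>M (borel :: 'a measure))"
    using sets_pair_measure_cong[OF sets_nu sets_nu] .
  also have "\<dots> = sets (borel :: ('a \<times> 'a) measure)" by (simp only: borel_prod)
  finally show ?thesis .
qed

lemma meas_prod: "f \<in> borel_measurable borel \<Longrightarrow> f \<in> borel_measurable (nu \<Otimes>\<^sub>M nu)"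
  unfolding measurable_cong_sets[OF sets_prod refl, of borel] .

lemma pair_sf: "pair_sigma_finite nu nu"
  unfolding pair_sigma_finite_def by (intro conjI; rule sigma_finite_measure_axioms)

lemma m_meas: "(\<lambda>x. m x r) \<in> borel_measurable borel"
proof -
  have Q: "{p::'a\<times>'a. dist (fst p) (snd p) < r} \<in> sets (borel \<Otimes>\<^sub>M nu)"
  proof -
    have "open {p::'a\<times>'a. dist (fst p) (snd p) < r}"
      by (intro open_Collect_less continuous_intros)
    then have "{p::'a\<times>'a. dist (fst p) (snd p) < r} \<in> sets (borel :: ('a \<times> 'a) measure)" by simp
    also have "sets (borel :: ('a \<times> 'a) measure) = sets (borel \<Otimes>\<^sub>M (borel :: 'a measure))"
      by (simp only: borel_prod)
    also have "\<dots> = sets (borel \<Otimes>\<^sub>M nu)"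
      using sets_pair_measure_cong[OF refl sets_nu, of "borel :: 'a measure"] by simp
    finally show ?thesis .
  qed
  have "(\<lambda>x. emeasure nu (Pair x -` {p::'a\<times>'a. dist (fst p) (snd p) < r})) \<in> borel_measurable borel"
    by (rule measurable_emeasure_Pair[OF Q])
  moreover have "Pair x -` {p::'a\<times>'a. dist (fst p) (snd p) < r} = ball x r" for x
    by (auto simp: ball_def)
  ultimately have "(\<lambda>x. emeasure nu (ball x r)) \<in> borel_measurable borel" by simp
  then have "(\<lambda>x. enn2real (emeasure nu (ball x r))) \<in> borel_measurable borel" by measurable
  then show ?thesis unfolding m_def measure_def .
qed

lemma ind_meas: "(\<lambda>p::'a\<times>'a. indicator (ball (fst p) r) (snd p) :: 'b::{zero_neq_one, topological_space}) \<in> borel_measurable borel"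
proof -
  have "open {p::'a\<times>'a. dist (fst p) (snd p) < r}"
    by (intro open_Collect_less continuous_intros)
  then have "(indicator {p::'a\<times>'a. dist (fst p) (snd p) < r} :: _ \<Rightarrow> 'b) \<in> borel_measurable borel"
    by (intro borel_measurable_indicator borel_open)
  moreover have "indicator (ball (fst p) r) (snd p) = (indicator {p::'a\<times>'a. dist (fst p) (snd p) < r} p :: 'b)" for p
    by (auto simp: indicator_def ball_def)
  ultimately show ?thesis by simp
qed


definition sep :: "real \<Rightarrow> 'a set \<Rightarrow> bool" where
  "sep e F \<longleftrightarrow> (\<forall>a\<in>F. \<forall>b\<in>F. a \<noteq> b \<longrightarrow> e \<le> dist a b)"

lemma sep_card:
  assumes e: "e > 0" and k: "\<rho> + e/2 \<le> 2^k * (e/2)"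
    and F: "finite F" "F \<subseteq> cball x \<rho>" "sep e F"
  shows "real (card F) * (m x (e/2) / C^k) \<le> measure nu UNIV"
proof -
  have Ck: "C^k > 0" using C1 by simp
  have lowb: "m x (e/2) / C^k \<le> m f (e/2)" if "f \<in> F" for f
  proof -
    have "dist f x \<le> \<rho>" using F(2) that by (auto simp: dist_commute)
    then have "m x (e/2) \<le> m f (e/2 + \<rho>)" by (rule m_shift)
    also have "\<dots> \<le> C^k * m f (e/2)" by (rule m_cmp) (use e k in auto)
    finally show ?thesis using Ck by (simp add: field_simps)
  qed
  have disj: "disjoint_family_on (\<lambda>f. ball f (e/2)) F"
  unfolding disjoint_family_on_def
  proof (intro ballI impI)
    fix a b assume ab: "a \<in> F" "b \<in> F" "a \<noteq> b"
    then have eab: "e \<le> dist a b" using F(3) by (auto simp: sep_def)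
    show "ball a (e/2) \<inter> ball b (e/2) = {}"
    proof (rule ccontr)
      assume "ball a (e/2) \<inter> ball b (e/2) \<noteq> {}"
      then obtain w where w: "dist a w < e/2" "dist b w < e/2" by auto
      have "dist a b \<le> dist a w + dist w b" by (rule dist_triangle)
      then show False using w eab by (simp add: dist_commute)
    qed
  qed
  have "real (card F) * (m x (e/2) / C^k) = (\<Sum>f\<in>F. m x (e/2) / C^k)" by simp
  also have "\<dots> \<le> (\<Sum>f\<in>F. m f (e/2))" by (rule sum_mono) (rule lowb)
  also have "\<dots> = measure nu (\<Union>f\<in>F. ball f (e/2))"
    unfolding m_def by (rule finite_measure_finite_Union[symmetric]) (use F disj in auto)
  also have "\<dots> \<le> measure nu UNIV" using bounded_measure by simp
  finally show ?thesis .
qed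

lemma compact_cball_nu: "compact (cball (x::'a) \<rho>)"
proof (cases "\<rho> < 0")
  case True then show ?thesis by simp
next
  case False
  have "complete (cball x \<rho>)" by (simp add: complete_eq_closed)
  moreover have "\<exists>k. finite k \<and> cball x \<rho> \<subseteq> (\<Union>y\<in>k. ball y e)" if e: "e > 0" for e
  proof -
    obtain k where k: "(\<rho> + e/2) / (e/2) < 2^k" using real_arch_pow[of 2] by auto
    have k': "\<rho> + e/2 \<le> 2^k * (e/2)" using k e by (simp add: field_simps)
    define \<delta> where "\<delta> = m x (e/2) / C^k"
    have d0: "\<delta> > 0" unfolding \<delta>_def using m_pos[of "e/2" x] e C1 by simp
    define N where "N = nat \<lceil>measure nu UNIV / \<delta>\<rceil>"
    define P where "P n \<longleftrightarrow> (\<exists>F. finite F \<and> F \<subseteq> cball x \<rho> \<and> sep e F \<and> card F = n)" for n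
    have P0: "P 0" unfolding P_def by (rule exI[of _ "{}"]) (simp add: sep_def)
    have Pb: "\<forall>n. P n \<longrightarrow> n \<le> N"
    proof (intro allI impI)
      fix n assume "P n"
      then obtain F where F: "finite F" "F \<subseteq> cball x \<rho>" "sep e F" "card F = n" unfolding P_def by auto
      have "real n * \<delta> \<le> measure nu UNIV" using sep_card[OF e k' F(1-3)] F(4) unfolding \<delta>_def by simp
      then have "real n \<le> measure nu UNIV / \<delta>" using d0 by (simp add: field_simps)
      then show "n \<le> N" unfolding N_def by linarith
    qed
    obtain n where n: "P n" "\<forall>n'. P n' \<longrightarrow> n' \<le> n" using Nat.ex_has_greatest_nat[OF P0 Pb] by blast
    then obtain F where F: "finite F" "F \<subseteq> cball x \<rho>" "sep e F" "card F = n" unfolding P_def by auto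
    have "cball x \<rho> \<subseteq> (\<Union>y\<in>F. ball y e)"
    proof
      fix s assume s: "s \<in> cball x \<rho>"
      show "s \<in> (\<Union>y\<in>F. ball y e)"
      proof (rule ccontr)
        assume ns: "s \<notin> (\<Union>y\<in>F. ball y e)"
        then have sF: "s \<notin> F" using e by auto
        have "sep e (insert s F)" using F(3) ns unfolding sep_def by (auto simp: dist_commute)
        then have "P (Suc n)" unfolding P_def using F sF s
          by (intro exI[of _ "insert s F"]) auto
        then show False using n(2) by auto
      qed
    qed
    then show ?thesis using F(1) by blast
  qed
  ultimately show ?thesis unfolding compact_eq_totally_bounded by blast
qed

lemma loclip_cball:
  fixes x :: 'a
  assumes "locally_lipschitz u"
  obtains L where "L-lipschitz_on (cball x \<rho>) u"
proof -
  have ll: "local_lipschitz {0::real} (cball x \<rho>) (\<lambda>t. u)"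
  proof (rule local_lipschitzI)
    fix t :: real and y assume "y \<in> cball x \<rho>"
    obtain r L where r: "r > 0" "L-lipschitz_on (ball y r) u"
      using assms unfolding locally_lipschitz_def by blast
    have "L-lipschitz_on (cball y (r/2) \<inter> cball x \<rho>) u"
      by (rule lipschitz_on_subset[OF r(2)]) (use r in auto)
    then show "\<exists>u'>0. \<exists>L. \<forall>t\<in>cball t u' \<inter> {0}. L-lipschitz_on (cball y u' \<inter> cball x \<rho>) u"
      using r by (intro exI[of _ "r/2"]) auto
  qed
  obtain L where "\<And>t. t \<in> {0::real} \<Longrightarrow> L-lipschitz_on (cball x \<rho>) u"
    by (rule local_lipschitz_compact_implies_lipschitz[OF ll compact_cball_nu]) auto
  then show ?thesis using that by blast
qed

lemma poincare_loc:
  assumes P: "\<forall>u x r. (\<exists>L. L-lipschitz_on UNIV u) \<longrightarrow> r > 0 \<longrightarrow>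
      (\<integral>\<^sup>+ y\<in>ball x r. ennreal \<bar>u y - avg nu (ball x r) u\<bar> \<partial>nu)
        \<le> ennreal (c * r) * (\<integral>\<^sup>+ y\<in>ball x (lam * r). slope u y \<partial>nu)"
    and lam: "lam \<ge> 1" and u: "locally_lipschitz u" and r: "r > 0"
  shows "(\<integral>\<^sup>+ y\<in>ball z r. ennreal \<bar>u y - avg nu (ball z r) u\<bar> \<partial>nu)
        \<le> ennreal (c * r) * (\<integral>\<^sup>+ y\<in>ball z (lam * r). slope u y \<partial>nu)"
proof -
  define K where "K = cball z (lam * r)"
  obtain L where L: "L-lipschitz_on K u" using loclip_cball[OF u] unfolding K_def by blast
  have zK: "z \<in> K" unfolding K_def using lam r by simp
  have "u z - L * (lam * r) \<le> u w" if "w \<in> K" for w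
  proof -
    have "dist (u w) (u z) \<le> L * dist w z" by (rule lipschitz_onD[OF L that zK])
    moreover have "L * dist w z \<le> L * (lam * r)"
      using that lipschitz_on_nonneg[OF L] unfolding K_def by (intro mult_left_mono) (auto simp: dist_commute)
    ultimately show ?thesis by (simp add: dist_real_def abs_le_iff)
  qed
  then have bb: "bdd_below (u ` K)" by (intro bdd_belowI2)
  obtain v where v: "L-lipschitz_on UNIV v" "\<And>x. x \<in> K \<Longrightarrow> v x = u x"
    using mcshane[OF L _ bb] zK by blast
  have sub1: "ball z r \<subseteq> K" unfolding K_def using lam r
    by (auto simp: subset_iff) (smt (verit) mult_le_cancel_right1)
  have sub2: "ball z (lam*r) \<subseteq> K" unfolding K_def by auto
  have avg_eq: "avg nu (ball z r) v = avg nu (ball z r) u"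
  proof -
    have "(\<lambda>y. indicator (ball z r) y *\<^sub>R v y) = (\<lambda>y. indicator (ball z r) y *\<^sub>R u y)"
      using v(2) sub1 by (auto simp: indicator_def fun_eq_iff)
    then show ?thesis unfolding avg_def set_lebesgue_integral_def by simp
  qed
  have l: "(\<integral>\<^sup>+ y\<in>ball z r. ennreal \<bar>u y - avg nu (ball z r) u\<bar> \<partial>nu) =
           (\<integral>\<^sup>+ y\<in>ball z r. ennreal \<bar>v y - avg nu (ball z r) v\<bar> \<partial>nu)"
    using v(2) sub1 avg_eq by (intro nn_integral_cong) (auto simp: indicator_def)
  have rr: "(\<integral>\<^sup>+ y\<in>ball z (lam*r). slope v y \<partial>nu) = (\<integral>\<^sup>+ y\<in>ball z (lam*r). slope u y \<partial>nu)"
  proof (intro nn_integral_cong)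
    fix y
    show "slope v y * indicator (ball z (lam * r)) y = slope u y * indicator (ball z (lam * r)) y"
    proof (cases "y \<in> ball z (lam*r)")
      case True
      have "slope v y = slope u y"
        by (rule slope_local[OF _ True]) (use v(2) sub2 in auto)
      then show ?thesis by simp
    qed simp
  qed
  show ?thesis unfolding l rr[symmetric] using P v(1) r by blast
qed
lemma loclip_cont: assumes "locally_lipschitz u" shows "continuous_on UNIV u"
proof -
  have "isCont u x" for x
  proof -
    obtain r L where r: "r > 0" "L-lipschitz_on (ball x r) u"
      using assms unfolding locally_lipschitz_def by blast
    have "continuous_on (ball x r) u" by (rule lipschitz_on_continuous_on[OF r(2)])
    then show ?thesis using continuous_on_interior[of "ball x r" u x] r(1) by simp
  qed
  then show ?thesis by (simp add: continuous_at_imp_continuous_on)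
qed

lemma loclip_meas: "locally_lipschitz u \<Longrightarrow> u \<in> borel_measurable nu"
  by (intro meas_nu borel_measurable_continuous_onI loclip_cont)

lemma ind_nu[measurable]: "(\<lambda>p. indicator (ball (fst p) r) (snd p) :: 'b::{zero_neq_one, topological_space}) \<in> borel_measurable (nu \<Otimes>\<^sub>M nu)"
  by (rule meas_prod[OF ind_meas])

lemma m_nu[measurable]: "(\<lambda>x. m x r) \<in> borel_measurable nu"
  by (rule meas_nu[OF m_meas])

lemma pred1[measurable]: "Measurable.pred (nu \<Otimes>\<^sub>M nu) (\<lambda>p. snd p \<in> ball (fst p) r)"
proof -
  have "open {p::'a\<times>'a. dist (fst p) (snd p) < r}"
    by (intro open_Collect_less continuous_intros)
  then have "{p::'a\<times>'a. dist (fst p) (snd p) < r} \<in> sets (nu \<Otimes>\<^sub>M nu)" by (simp add: sets_prod)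
  then show ?thesis unfolding pred_def by (simp add: space_pair_measure)
qed

lemma pred2[measurable]: "Measurable.pred (nu \<Otimes>\<^sub>M nu) (\<lambda>p. fst p \<in> ball (snd p) r)"
proof -
  have "open {p::'a\<times>'a. dist (snd p) (fst p) < r}"
    by (intro open_Collect_less continuous_intros)
  then have "{p::'a\<times>'a. dist (snd p) (fst p) < r} \<in> sets (nu \<Otimes>\<^sub>M nu)" by (simp add: sets_prod)
  then show ?thesis unfolding pred_def by (simp add: space_pair_measure)
qed

lemma ind_sym: "indicator (ball x r) y = indicator (ball y r) x"
  by (simp add: indicator_def dist_commute)

lemma avg_meas: assumes [measurable]: "u \<in> borel_measurable nu"
  shows "(\<lambda>z. avg nu (ball z r) u) \<in> borel_measurable nu"
proof -
  have "(\<lambda>z. \<integral>y. indicator (ball z r) y *\<^sub>R u y \<partial>nu) \<in> borel_measurable nu"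
    by measurable
  then show ?thesis unfolding avg_def set_lebesgue_integral_def m_def[symmetric] by measurable
qed

lemma swap: "case_prod F \<in> borel_measurable (nu \<Otimes>\<^sub>M nu) \<Longrightarrow>
  (\<integral>\<^sup>+x. \<integral>\<^sup>+y. F x y \<partial>nu \<partial>nu) = (\<integral>\<^sup>+y. \<integral>\<^sup>+x. F x y \<partial>nu \<partial>nu)"
  by (rule pair_sigma_finite.Fubini'[OF pair_sf, symmetric])

lemma wball:
  assumes r: "r > 0" and B: "B \<ge> 0" and w: "\<And>x. dist x y < r \<Longrightarrow> w x * m y r \<le> B"
  shows "(\<integral>\<^sup>+x. ennreal (w x) * indicator (ball y r) x \<partial>nu) \<le> ennreal B"
proof -
  have my: "m y r > 0" using m_pos[OF r] .
  have "(\<integral>\<^sup>+x. ennreal (w x) * indicator (ball y r) x \<partial>nu) \<le> (\<integral>\<^sup>+x. ennreal (B / m y r) * indicator (ball y r) x \<partial>nu)"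
  proof (intro nn_integral_mono)
    fix x
    show "ennreal (w x) * indicator (ball y r) x \<le> ennreal (B / m y r) * indicator (ball y r) x"
    proof (cases "x \<in> ball y r")
      case True
      then have "w x * m y r \<le> B" using w by (simp add: dist_commute)
      then have "w x \<le> B / m y r" using my by (simp add: pos_le_divide_eq)
      then show ?thesis using True by (simp add: ennreal_leI)
    qed simp
  qed
  also have "\<dots> = ennreal (B / m y r) * ennreal (m y r)"
    by (simp add: nn_integral_cmult_indicator emeasure_ball)
  also have "\<dots> = ennreal B" using my B by (simp add: ennreal_mult[symmetric])
  finally show ?thesis .
qed


lemma lemmaA:
  assumes P: "\<forall>u x r. (\<exists>L. L-lipschitz_on UNIV u) \<longrightarrow> r > 0 \<longrightarrow>
      (\<integral>\<^sup>+ y\<in>ball x r. ennreal \<bar>u y - avg nu (ball x r) u\<bar> \<partial>nu)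
        \<le> ennreal (c * r) * (\<integral>\<^sup>+ y\<in>ball x (lam * r). slope u y \<partial>nu)"
    and c: "c > 0" and lam: "lam \<ge> 1" and k: "2 * lam \<le> 2^k"
    and u: "locally_lipschitz u" and e: "\<epsilon> > 0"
  shows "(\<integral>\<^sup>+x. (1 / emeasure nu (ball x \<epsilon>)) * (\<integral>\<^sup>+y\<in>ball x \<epsilon>. ennreal \<bar>u y - u x\<bar> \<partial>nu) \<partial>nu)
         \<le> ennreal ((C^3 + C) * C * c * 2 * C^k * \<epsilon>) * (\<integral>\<^sup>+y. slope u y \<partial>nu)"
proof -
  define R where "R = 2 * \<epsilon>"
  have R: "R > 0" using e by (simp add: R_def)
  note um[measurable] = loclip_meas[OF u]
  define a where "a z = avg nu (ball z R) u" for z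
  have am[measurable]: "a \<in> borel_measurable nu" unfolding a_def by (rule avg_meas[OF um])
  define H where "H y = (\<integral>\<^sup>+z\<in>ball y R. ennreal \<bar>u y - a z\<bar> \<partial>nu)" for y
  have Hm[measurable]: "H \<in> borel_measurable nu" unfolding H_def by measurable
  define G where "G y = ennreal (1 / m y R) * H y" for y
  have Gm[measurable]: "G \<in> borel_measurable nu" unfolding G_def by measurable
  have HG: "H y = ennreal (m y R) * G y" for y
  proof -
    have "m y R > 0" using m_pos[OF R] .
    then have "ennreal (m y R) * ennreal (1 / m y R) = 1"
      by (simp add: ennreal_mult[symmetric])
    then show ?thesis unfolding G_def by (simp add: mult.assoc[symmetric])
  qed
  have C0: "C > 0" using C1 by simp
  have S1: "ennreal \<bar>u y - u x\<bar> \<le> ennreal (C^2) * G y + ennreal C * G x" if xy: "dist x y < \<epsilon>" for x y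
  proof -
    have mx: "m x \<epsilon> > 0" using m_pos[OF e] .
    have b1: "m y R \<le> C^2 * m x \<epsilon>"
    proof -
      have "m y R \<le> m x (R + \<epsilon>)" by (rule m_shift) (use xy in linarith)
      also have "\<dots> \<le> C^2 * m x \<epsilon>" by (rule m_cmp[OF e]) (use e in \<open>simp add: R_def\<close>)
      finally show ?thesis .
    qed
    have b2: "m x R \<le> C * m x \<epsilon>" unfolding R_def by (rule m_dbl[OF e])
    have "(\<integral>\<^sup>+z\<in>ball x \<epsilon>. ennreal \<bar>u y - u x\<bar> \<partial>nu) = ennreal \<bar>u y - u x\<bar> * emeasure nu (ball x \<epsilon>)"
      by (rule nn_integral_cmult_indicator) simp
    then have "ennreal (m x \<epsilon>) * ennreal \<bar>u y - u x\<bar> = (\<integral>\<^sup>+z\<in>ball x \<epsilon>. ennreal \<bar>u y - u x\<bar> \<partial>nu)"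
      by (simp add: emeasure_ball mult.commute)
    also have "\<dots> \<le> (\<integral>\<^sup>+z. ennreal \<bar>u y - a z\<bar> * indicator (ball x \<epsilon>) z + ennreal \<bar>u x - a z\<bar> * indicator (ball x \<epsilon>) z \<partial>nu)"
    proof (intro nn_integral_mono)
      fix z
      have "\<bar>u y - u x\<bar> \<le> \<bar>u y - a z\<bar> + \<bar>u x - a z\<bar>" by linarith
      then have "ennreal \<bar>u y - u x\<bar> \<le> ennreal \<bar>u y - a z\<bar> + ennreal \<bar>u x - a z\<bar>"
        by (simp add: ennreal_plus[symmetric] del: ennreal_plus)
      then show "ennreal \<bar>u y - u x\<bar> * indicator (ball x \<epsilon>) z \<le>
          ennreal \<bar>u y - a z\<bar> * indicator (ball x \<epsilon>) z + ennreal \<bar>u x - a z\<bar> * indicator (ball x \<epsilon>) z"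
        by (simp add: indicator_def)
    qed
    also have "\<dots> = (\<integral>\<^sup>+z\<in>ball x \<epsilon>. ennreal \<bar>u y - a z\<bar> \<partial>nu) + (\<integral>\<^sup>+z\<in>ball x \<epsilon>. ennreal \<bar>u x - a z\<bar> \<partial>nu)"
      by (rule nn_integral_add) measurable
    also have "\<dots> \<le> H y + H x" unfolding H_def
    proof (intro add_mono nn_integral_mono)
      fix z
      show "ennreal \<bar>u y - a z\<bar> * indicator (ball x \<epsilon>) z \<le> ennreal \<bar>u y - a z\<bar> * indicator (ball y R) z"
      proof (cases "z \<in> ball x \<epsilon>")
        case True
        have "dist y z \<le> dist y x + dist x z" by (rule dist_triangle)
        then have "z \<in> ball y R" using True xy by (simp add: R_def dist_commute)
        then show ?thesis using True by simp
      qed simp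
      show "ennreal \<bar>u x - a z\<bar> * indicator (ball x \<epsilon>) z \<le> ennreal \<bar>u x - a z\<bar> * indicator (ball x R) z"
        using e by (cases "z \<in> ball x \<epsilon>") (auto simp: R_def)
    qed
    also have "\<dots> = ennreal (m y R) * G y + ennreal (m x R) * G x" by (simp add: HG)
    also have "\<dots> \<le> ennreal (C^2 * m x \<epsilon>) * G y + ennreal (C * m x \<epsilon>) * G x"
      by (intro add_mono mult_right_mono ennreal_leI b1 b2) auto
    also have "\<dots> = ennreal (m x \<epsilon>) * (ennreal (C^2) * G y + ennreal C * G x)"
      using C0 m_nonneg[of x \<epsilon>] by (simp add: ennreal_mult distrib_left mult_ac)
    finally show ?thesis using mx by (simp add: ennreal_mult_le_mult_iff)
  qed
  have mpos: "\<And>x r. r > 0 \<Longrightarrow> m x r > 0" using m_pos .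
  have inv1: "ennreal (1 / m x r) * ennreal (m x r) = 1" if "r > 0" for x r
    using mpos[OF that, of x] by (simp add: ennreal_mult[symmetric])
  have Im[measurable]: "(\<lambda>x. ennreal (1 / m x \<epsilon>) * (\<integral>\<^sup>+y\<in>ball x \<epsilon>. G y \<partial>nu)) \<in> borel_measurable nu"
    by measurable
  have E1: "(\<integral>\<^sup>+x. (1 / emeasure nu (ball x \<epsilon>)) * (\<integral>\<^sup>+y\<in>ball x \<epsilon>. ennreal \<bar>u y - u x\<bar> \<partial>nu) \<partial>nu)
      \<le> (\<integral>\<^sup>+x. ennreal (C^2) * (ennreal (1 / m x \<epsilon>) * (\<integral>\<^sup>+y\<in>ball x \<epsilon>. G y \<partial>nu)) + ennreal C * G x \<partial>nu)"
  proof (intro nn_integral_mono)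
    fix x
    have mx: "m x \<epsilon> > 0" using mpos[OF e] .
    have inv: "1 / emeasure nu (ball x \<epsilon>) = ennreal (1 / m x \<epsilon>)"
      using mx by (simp add: emeasure_ball divide_ennreal[of 1, symmetric])
    have "(\<integral>\<^sup>+y\<in>ball x \<epsilon>. ennreal \<bar>u y - u x\<bar> \<partial>nu) \<le>
        (\<integral>\<^sup>+y. ennreal (C^2) * (G y * indicator (ball x \<epsilon>) y) + (ennreal C * G x) * indicator (ball x \<epsilon>) y \<partial>nu)"
    proof (intro nn_integral_mono)
      fix y
      show "ennreal \<bar>u y - u x\<bar> * indicator (ball x \<epsilon>) y \<le>
          ennreal (C^2) * (G y * indicator (ball x \<epsilon>) y) + (ennreal C * G x) * indicator (ball x \<epsilon>) y"
        using S1[of x y] by (cases "y \<in> ball x \<epsilon>") auto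
    qed
    also have "\<dots> = (\<integral>\<^sup>+y. ennreal (C^2) * (G y * indicator (ball x \<epsilon>) y) \<partial>nu) + (\<integral>\<^sup>+y. (ennreal C * G x) * indicator (ball x \<epsilon>) y \<partial>nu)"
      by (rule nn_integral_add) measurable
    also have "\<dots> = ennreal (C^2) * (\<integral>\<^sup>+y\<in>ball x \<epsilon>. G y \<partial>nu) + (ennreal C * G x) * ennreal (m x \<epsilon>)"
    proof -
      have "(\<integral>\<^sup>+y. ennreal (C^2) * (G y * indicator (ball x \<epsilon>) y) \<partial>nu) = ennreal (C^2) * (\<integral>\<^sup>+y\<in>ball x \<epsilon>. G y \<partial>nu)"
        by (rule nn_integral_cmult) measurable
      moreover have "(\<integral>\<^sup>+y. (ennreal C * G x) * indicator (ball x \<epsilon>) y \<partial>nu) = (ennreal C * G x) * ennreal (m x \<epsilon>)"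
        using nn_integral_cmult_indicator[of "ball x \<epsilon>" nu "ennreal C * G x"] by (simp add: emeasure_ball)
      ultimately show ?thesis by simp
    qed
    finally have le: "(\<integral>\<^sup>+y\<in>ball x \<epsilon>. ennreal \<bar>u y - u x\<bar> \<partial>nu) \<le>
        ennreal (C^2) * (\<integral>\<^sup>+y\<in>ball x \<epsilon>. G y \<partial>nu) + (ennreal C * G x) * ennreal (m x \<epsilon>)" .
    have "(1 / emeasure nu (ball x \<epsilon>)) * (\<integral>\<^sup>+y\<in>ball x \<epsilon>. ennreal \<bar>u y - u x\<bar> \<partial>nu) \<le>
        ennreal (1 / m x \<epsilon>) * (ennreal (C^2) * (\<integral>\<^sup>+y\<in>ball x \<epsilon>. G y \<partial>nu) + (ennreal C * G x) * ennreal (m x \<epsilon>))"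
      unfolding inv by (rule mult_left_mono[OF le]) simp
    also have "\<dots> = ennreal (C^2) * (ennreal (1 / m x \<epsilon>) * (\<integral>\<^sup>+y\<in>ball x \<epsilon>. G y \<partial>nu)) + ennreal C * G x * (ennreal (1 / m x \<epsilon>) * ennreal (m x \<epsilon>))"
      by (simp add: distrib_left mult_ac)
    also have "\<dots> = ennreal (C^2) * (ennreal (1 / m x \<epsilon>) * (\<integral>\<^sup>+y\<in>ball x \<epsilon>. G y \<partial>nu)) + ennreal C * G x"
      using inv1[OF e, of x] by simp
    finally show "(1 / emeasure nu (ball x \<epsilon>)) * (\<integral>\<^sup>+y\<in>ball x \<epsilon>. ennreal \<bar>u y - u x\<bar> \<partial>nu) \<le>
        ennreal (C^2) * (ennreal (1 / m x \<epsilon>) * (\<integral>\<^sup>+y\<in>ball x \<epsilon>. G y \<partial>nu)) + ennreal C * G x" .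
  qed
  have E2: "(\<integral>\<^sup>+x. ennreal (C^2) * (ennreal (1 / m x \<epsilon>) * (\<integral>\<^sup>+y\<in>ball x \<epsilon>. G y \<partial>nu)) + ennreal C * G x \<partial>nu)
     = ennreal (C^2) * (\<integral>\<^sup>+x. ennreal (1 / m x \<epsilon>) * (\<integral>\<^sup>+y\<in>ball x \<epsilon>. G y \<partial>nu) \<partial>nu) + ennreal C * (\<integral>\<^sup>+x. G x \<partial>nu)"
  proof -
    have "(\<integral>\<^sup>+x. ennreal (C^2) * (ennreal (1 / m x \<epsilon>) * (\<integral>\<^sup>+y\<in>ball x \<epsilon>. G y \<partial>nu)) + ennreal C * G x \<partial>nu)
      = (\<integral>\<^sup>+x. ennreal (C^2) * (ennreal (1 / m x \<epsilon>) * (\<integral>\<^sup>+y\<in>ball x \<epsilon>. G y \<partial>nu)) \<partial>nu) + (\<integral>\<^sup>+x. ennreal C * G x \<partial>nu)"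
      by (rule nn_integral_add) measurable
    then show ?thesis by (simp add: nn_integral_cmult[OF Im] nn_integral_cmult[OF Gm])
  qed
  have wA: "(1 / m x \<epsilon>) * m y \<epsilon> \<le> C" if "dist x y < \<epsilon>" for x y
  proof -
    have "m y \<epsilon> \<le> m x (\<epsilon> + \<epsilon>)" by (rule m_shift) (use that in simp)
    also have "\<dots> \<le> C * m x \<epsilon>" using m_dbl[OF e, of x] by (simp add: mult_2[symmetric])
    finally show ?thesis using mpos[OF e, of x] by (simp add: field_simps)
  qed
  have E3: "(\<integral>\<^sup>+x. ennreal (1 / m x \<epsilon>) * (\<integral>\<^sup>+y\<in>ball x \<epsilon>. G y \<partial>nu) \<partial>nu) \<le> ennreal C * (\<integral>\<^sup>+y. G y \<partial>nu)"
  proof -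
    have "(\<integral>\<^sup>+x. ennreal (1 / m x \<epsilon>) * (\<integral>\<^sup>+y\<in>ball x \<epsilon>. G y \<partial>nu) \<partial>nu) =
        (\<integral>\<^sup>+x. \<integral>\<^sup>+y. ennreal (1 / m x \<epsilon>) * (G y * indicator (ball x \<epsilon>) y) \<partial>nu \<partial>nu)"
      by (intro nn_integral_cong nn_integral_cmult[symmetric]) measurable
    also have "\<dots> = (\<integral>\<^sup>+y. \<integral>\<^sup>+x. ennreal (1 / m x \<epsilon>) * (G y * indicator (ball x \<epsilon>) y) \<partial>nu \<partial>nu)"
      by (rule swap) measurable
    also have "\<dots> = (\<integral>\<^sup>+y. G y * (\<integral>\<^sup>+x. ennreal (1 / m x \<epsilon>) * indicator (ball y \<epsilon>) x \<partial>nu) \<partial>nu)"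
    proof (intro nn_integral_cong)
      fix y
      have "(\<integral>\<^sup>+x. ennreal (1 / m x \<epsilon>) * (G y * indicator (ball x \<epsilon>) y) \<partial>nu) =
          (\<integral>\<^sup>+x. G y * (ennreal (1 / m x \<epsilon>) * indicator (ball y \<epsilon>) x) \<partial>nu)"
        by (intro nn_integral_cong) (simp add: ind_sym[of _ \<epsilon> y] mult_ac)
      also have "\<dots> = G y * (\<integral>\<^sup>+x. ennreal (1 / m x \<epsilon>) * indicator (ball y \<epsilon>) x \<partial>nu)"
        by (rule nn_integral_cmult) measurable
      finally show "(\<integral>\<^sup>+x. ennreal (1 / m x \<epsilon>) * (G y * indicator (ball x \<epsilon>) y) \<partial>nu) =
          G y * (\<integral>\<^sup>+x. ennreal (1 / m x \<epsilon>) * indicator (ball y \<epsilon>) x \<partial>nu)" .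
    qed
    also have "\<dots> \<le> (\<integral>\<^sup>+y. G y * ennreal C \<partial>nu)"
      by (intro nn_integral_mono mult_left_mono wball[OF e]) (use C0 wA in auto)
    also have "\<dots> = ennreal C * (\<integral>\<^sup>+y. G y \<partial>nu)"
      by (subst nn_integral_multc[OF Gm]) (rule mult.commute)
    finally show ?thesis .
  qed
  have Etot: "(\<integral>\<^sup>+x. (1 / emeasure nu (ball x \<epsilon>)) * (\<integral>\<^sup>+y\<in>ball x \<epsilon>. ennreal \<bar>u y - u x\<bar> \<partial>nu) \<partial>nu)
      \<le> ennreal (C^3 + C) * (\<integral>\<^sup>+y. G y \<partial>nu)"
  proof -
    have "ennreal (C^2) * (\<integral>\<^sup>+x. ennreal (1 / m x \<epsilon>) * (\<integral>\<^sup>+y\<in>ball x \<epsilon>. G y \<partial>nu) \<partial>nu) + ennreal C * (\<integral>\<^sup>+x. G x \<partial>nu)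
        \<le> ennreal (C^2) * (ennreal C * (\<integral>\<^sup>+y. G y \<partial>nu)) + ennreal C * (\<integral>\<^sup>+x. G x \<partial>nu)"
      by (intro add_mono mult_left_mono E3) auto
    also have "\<dots> = (ennreal (C^2) * ennreal C + ennreal C) * (\<integral>\<^sup>+y. G y \<partial>nu)"
      by (simp add: distrib_right mult.assoc)
    also have "ennreal (C^2) * ennreal C + ennreal C = ennreal (C^3 + C)"
      using C0 by (simp add: ennreal_mult[symmetric] power3_eq_cube power2_eq_square)
    finally show ?thesis using E1 E2 by simp
  qed
  have C3: "C^3 + C > 0" using C0 by (simp add: add_pos_pos)
  have Kpos: "(C^3 + C) * C * c * 2 * C^k * \<epsilon> > 0" using C0 c e C3 by (intro mult_pos_pos) auto
  show ?thesis
  proof (cases "(\<integral>\<^sup>+y. slope u y \<partial>nu) = \<infinity>")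
    case True
    have "ennreal ((C^3 + C) * C * c * 2 * C^k * \<epsilon>) * top = top"
      using Kpos by (intro ennreal_top_mult_left) (simp only: ennreal_eq_0_iff not_le)
    then show ?thesis using True by simp
  next
    case False
    then have fin: "integral\<^sup>N nu (slope u) < \<infinity>" by (simp add: less_top)
    obtain g where gm[measurable]: "g \<in> borel_measurable nu" and gs: "\<And>x. g x \<le> slope u x"
      and gB: "\<And>B. B \<in> sets nu \<Longrightarrow> (\<integral>\<^sup>+x\<in>B. slope u x \<partial>nu) \<le> (\<integral>\<^sup>+x\<in>B. g x \<partial>nu)"
      using envelope[OF fin] by blast
    have PB: "(\<integral>\<^sup>+y\<in>ball z R. ennreal \<bar>u y - a z\<bar> \<partial>nu) \<le> ennreal (c*R) * (\<integral>\<^sup>+w\<in>ball z (lam*R). g w \<partial>nu)" for z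
    proof -
      have "(\<integral>\<^sup>+y\<in>ball z R. ennreal \<bar>u y - a z\<bar> \<partial>nu) \<le> ennreal (c*R) * (\<integral>\<^sup>+w\<in>ball z (lam*R). slope u w \<partial>nu)"
        unfolding a_def by (rule poincare_loc[OF P lam u R])
      also have "\<dots> \<le> ennreal (c*R) * (\<integral>\<^sup>+w\<in>ball z (lam*R). g w \<partial>nu)"
        by (intro mult_left_mono gB) auto
      finally show ?thesis .
    qed
    have wB: "(1 / m y R) \<le> C / m z R" if "dist y z < R" for y z
    proof -
      have "m z R \<le> m y (R + R)" by (rule m_shift) (use that in simp)
      also have "\<dots> \<le> C * m y R" using m_dbl[OF R, of y] by (simp add: mult_2[symmetric])
      finally show ?thesis using mpos[OF R, of y] mpos[OF R, of z] by (simp add: field_simps)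
    qed
    have wC: "(1 / m z R) * m w (lam*R) \<le> C^k" if "dist z w < lam * R" for z w
    proof -
      have "m w (lam*R) \<le> m z (lam*R + lam*R)" by (rule m_shift) (use that in simp)
      also have "\<dots> \<le> C^k * m z R" by (rule m_cmp[OF R]) (use k R in \<open>simp add: algebra_simps mult_right_mono\<close>)
      finally show ?thesis using mpos[OF R, of z] by (simp add: field_simps)
    qed
    have "(\<integral>\<^sup>+y. G y \<partial>nu) = (\<integral>\<^sup>+y. \<integral>\<^sup>+z. ennreal (1 / m y R) * (ennreal \<bar>u y - a z\<bar> * indicator (ball y R) z) \<partial>nu \<partial>nu)"
      unfolding G_def H_def by (intro nn_integral_cong nn_integral_cmult[symmetric]) measurable
    also have "\<dots> \<le> (\<integral>\<^sup>+y. \<integral>\<^sup>+z. ennreal (C / m z R) * (ennreal \<bar>u y - a z\<bar> * indicator (ball z R) y) \<partial>nu \<partial>nu)"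
    proof (intro nn_integral_mono)
      fix y z
      show "ennreal (1 / m y R) * (ennreal \<bar>u y - a z\<bar> * indicator (ball y R) z) \<le>
            ennreal (C / m z R) * (ennreal \<bar>u y - a z\<bar> * indicator (ball z R) y)"
      proof (cases "dist y z < R")
        case True
        then show ?thesis using wB[OF True] by (auto simp: dist_commute intro!: mult_right_mono ennreal_leI)
      qed (simp add: dist_commute)
    qed
    also have "\<dots> = (\<integral>\<^sup>+z. \<integral>\<^sup>+y. ennreal (C / m z R) * (ennreal \<bar>u y - a z\<bar> * indicator (ball z R) y) \<partial>nu \<partial>nu)"
      by (rule swap) measurable
    also have "\<dots> = (\<integral>\<^sup>+z. ennreal (C / m z R) * (\<integral>\<^sup>+y\<in>ball z R. ennreal \<bar>u y - a z\<bar> \<partial>nu) \<partial>nu)"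
      by (intro nn_integral_cong nn_integral_cmult) measurable
    also have "\<dots> \<le> (\<integral>\<^sup>+z. ennreal (C / m z R) * (ennreal (c*R) * (\<integral>\<^sup>+w\<in>ball z (lam*R). g w \<partial>nu)) \<partial>nu)"
      by (intro nn_integral_mono mult_left_mono PB) auto
    also have "\<dots> = (\<integral>\<^sup>+z. ennreal (C*c*R) * (\<integral>\<^sup>+w. ennreal (1 / m z R) * (g w * indicator (ball z (lam*R)) w) \<partial>nu) \<partial>nu)"
    proof (intro nn_integral_cong)
      fix z
      have "(\<integral>\<^sup>+w. ennreal (1 / m z R) * (g w * indicator (ball z (lam*R)) w) \<partial>nu) =
          ennreal (1 / m z R) * (\<integral>\<^sup>+w\<in>ball z (lam*R). g w \<partial>nu)"
        by (rule nn_integral_cmult) measurable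
      moreover have "ennreal (C / m z R) * ennreal (c*R) = ennreal (C*c*R) * ennreal (1 / m z R)"
        using C0 c R mpos[OF R, of z] by (simp add: ennreal_mult[symmetric])
      ultimately show "ennreal (C / m z R) * (ennreal (c*R) * (\<integral>\<^sup>+w\<in>ball z (lam*R). g w \<partial>nu)) =
          ennreal (C*c*R) * (\<integral>\<^sup>+w. ennreal (1 / m z R) * (g w * indicator (ball z (lam*R)) w) \<partial>nu)"
        by (simp add: mult.assoc[symmetric])
    qed
    also have "\<dots> = ennreal (C*c*R) * (\<integral>\<^sup>+z. \<integral>\<^sup>+w. ennreal (1 / m z R) * (g w * indicator (ball z (lam*R)) w) \<partial>nu \<partial>nu)"
      by (rule nn_integral_cmult) measurable
    also have "(\<integral>\<^sup>+z. \<integral>\<^sup>+w. ennreal (1 / m z R) * (g w * indicator (ball z (lam*R)) w) \<partial>nu \<partial>nu) =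
        (\<integral>\<^sup>+w. \<integral>\<^sup>+z. ennreal (1 / m z R) * (g w * indicator (ball z (lam*R)) w) \<partial>nu \<partial>nu)"
      by (rule swap) measurable
    also have "\<dots> = (\<integral>\<^sup>+w. g w * (\<integral>\<^sup>+z. ennreal (1 / m z R) * indicator (ball w (lam*R)) z \<partial>nu) \<partial>nu)"
    proof (intro nn_integral_cong)
      fix w
      have "(\<integral>\<^sup>+z. ennreal (1 / m z R) * (g w * indicator (ball z (lam*R)) w) \<partial>nu) =
          (\<integral>\<^sup>+z. g w * (ennreal (1 / m z R) * indicator (ball w (lam*R)) z) \<partial>nu)"
        by (intro nn_integral_cong) (simp add: ind_sym[of w] mult_ac)
      also have "\<dots> = g w * (\<integral>\<^sup>+z. ennreal (1 / m z R) * indicator (ball w (lam*R)) z \<partial>nu)"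
        by (rule nn_integral_cmult) measurable
      finally show "(\<integral>\<^sup>+z. ennreal (1 / m z R) * (g w * indicator (ball z (lam*R)) w) \<partial>nu) =
          g w * (\<integral>\<^sup>+z. ennreal (1 / m z R) * indicator (ball w (lam*R)) z \<partial>nu)" .
    qed
    also have "\<dots> \<le> (\<integral>\<^sup>+w. g w * ennreal (C^k) \<partial>nu)"
    proof (intro nn_integral_mono mult_left_mono wball)
      show "0 < lam * R" using lam R by simp
    qed (use C0 wC in auto)
    also have "(\<integral>\<^sup>+w. g w * ennreal (C^k) \<partial>nu) = (\<integral>\<^sup>+w. g w \<partial>nu) * ennreal (C^k)"
      by (rule nn_integral_multc[OF gm])
    also have "\<dots> \<le> (\<integral>\<^sup>+w. slope u w \<partial>nu) * ennreal (C^k)"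
      by (intro mult_right_mono nn_integral_mono gs) auto
    finally have G3: "(\<integral>\<^sup>+y. G y \<partial>nu) \<le> ennreal (C*c*R) * ((\<integral>\<^sup>+w. slope u w \<partial>nu) * ennreal (C^k))"
      by (simp add: mult_left_mono)
    have "ennreal (C^3 + C) * (ennreal (C*c*R) * ((\<integral>\<^sup>+w. slope u w \<partial>nu) * ennreal (C^k))) =
        ennreal ((C^3 + C) * C * c * 2 * C^k * \<epsilon>) * (\<integral>\<^sup>+w. slope u w \<partial>nu)"
    proof -
      have r: "(C^3 + C) * (C*c*R) * C^k = (C^3 + C) * C * c * 2 * C^k * \<epsilon>" by (simp add: R_def mult_ac)
      have "ennreal (C^3 + C) * (ennreal (C*c*R) * ((\<integral>\<^sup>+w. slope u w \<partial>nu) * ennreal (C^k))) =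
          ennreal ((C^3 + C) * (C*c*R) * C^k) * (\<integral>\<^sup>+w. slope u w \<partial>nu)"
        using C0 c R C3 by (simp add: ennreal_mult mult_ac del: ennreal_plus)
      then show ?thesis unfolding r .
    qed
    moreover have "ennreal (C^3 + C) * (\<integral>\<^sup>+y. G y \<partial>nu) \<le>
        ennreal (C^3 + C) * (ennreal (C*c*R) * ((\<integral>\<^sup>+w. slope u w \<partial>nu) * ennreal (C^k)))"
      by (rule mult_left_mono[OF G3]) simp
    ultimately show ?thesis using Etot by simp
  qed
qed



lemma em_nu[measurable]: "(\<lambda>x. emeasure nu (ball x r)) \<in> borel_measurable nu"
  unfolding emeasure_ball by measurable

lemma lemmaB:
  assumes P: "\<forall>u x r. (\<exists>L. L-lipschitz_on UNIV u) \<longrightarrow> r > 0 \<longrightarrow>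
      (\<integral>\<^sup>+ y\<in>ball x r. ennreal \<bar>u y - avg nu (ball x r) u\<bar> \<partial>nu)
        \<le> ennreal (c * r) * (\<integral>\<^sup>+ y\<in>ball x (lam * r). slope u y \<partial>nu)"
    and c: "c > 0" and lam: "lam \<ge> 1" and k: "2 * lam \<le> 2^k"
    and psi: "psi \<in> BV_metric nu"
  obtains S :: real where "S \<ge> 0"
    "\<And>\<epsilon>. \<epsilon> > 0 \<Longrightarrow> nl_energy nu \<epsilon> psi \<le> ennreal ((C^3 + C) * C * c * 2 * C^k * \<epsilon>) * ennreal S"
proof -
  define K where "K = (C^3 + C) * C * c * 2 * C^k"
  from psi obtain un :: "nat \<Rightarrow> 'a \<Rightarrow> real" where
    pi: "integrable nu psi" and ul: "\<And>n. locally_lipschitz (un n)"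
    and ut: "(\<lambda>n. \<integral>\<^sup>+ x. ennreal \<bar>un n x - psi x\<bar> \<partial>nu) \<longlonglongrightarrow> 0"
    and us: "(SUP n. \<integral>\<^sup>+ x. slope (un n) x \<partial>nu) < \<infinity>"
    unfolding BV_metric_def by blast
  have psim[measurable]: "psi \<in> borel_measurable nu" using pi by (rule borel_measurable_integrable)
  have unm[measurable]: "un n \<in> borel_measurable nu" for n by (rule loclip_meas[OF ul])
  define S where "S = enn2real (SUP n. \<integral>\<^sup>+ x. slope (un n) x \<partial>nu)"
  have S0: "S \<ge> 0" unfolding S_def by simp
  have SS: "ennreal S = (SUP n. \<integral>\<^sup>+ x. slope (un n) x \<partial>nu)" unfolding S_def using us by simp
  have EA: "nl_energy nu \<epsilon> (un n) \<le> ennreal (K * \<epsilon>) * ennreal S" if e: "\<epsilon> > 0" for n \<epsilon>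
  proof -
    have "nl_energy nu \<epsilon> (un n) \<le> ennreal (K * \<epsilon>) * (\<integral>\<^sup>+ x. slope (un n) x \<partial>nu)"
      unfolding nl_energy_def K_def by (rule lemmaA[OF P c lam k ul e])
    also have "\<dots> \<le> ennreal (K * \<epsilon>) * ennreal S"
      unfolding SS by (intro mult_left_mono SUP_upper) auto
    finally show ?thesis .
  qed
  have "eventually (\<lambda>n. (\<integral>\<^sup>+ x. ennreal \<bar>un n x - psi x\<bar> \<partial>nu) < 1) sequentially"
    using ut by (rule order_tendstoD) simp
  then obtain N where N: "\<And>n. n \<ge> N \<Longrightarrow> (\<integral>\<^sup>+ x. ennreal \<bar>un n x - psi x\<bar> \<partial>nu) < 1"
    unfolding eventually_sequentially by blast
  define v where "v n = un (n + N)" for n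
  have vm[measurable]: "v n \<in> borel_measurable nu" for n unfolding v_def by measurable
  have vi: "integrable nu (\<lambda>x. v n x - psi x)" for n
  proof (rule integrableI_bounded)
    show "(\<lambda>x. v n x - psi x) \<in> borel_measurable nu" by measurable
    have "(\<integral>\<^sup>+ x. ennreal (norm (v n x - psi x)) \<partial>nu) < 1" using N[of "n + N"] by (simp add: v_def)
    then show "(\<integral>\<^sup>+ x. ennreal (norm (v n x - psi x)) \<partial>nu) < \<infinity>" using less_trans by fastforce
  qed
  have vt: "(\<lambda>n. \<integral>x. norm (v n x - psi x) \<partial>nu) \<longlonglongrightarrow> 0"
  proof -
    have eq: "ennreal (\<integral>x. norm (v n x - psi x) \<partial>nu) = (\<integral>\<^sup>+ x. ennreal \<bar>un (n + N) x - psi x\<bar> \<partial>nu)" for n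
      using nn_integral_eq_integral[OF integrable_norm[OF vi[of n]]] by (simp add: v_def)
    have "(\<lambda>n. \<integral>\<^sup>+ x. ennreal \<bar>un (n + N) x - psi x\<bar> \<partial>nu) \<longlonglongrightarrow> 0"
      using LIMSEQ_ignore_initial_segment[OF ut, of N] by simp
    then have "(\<lambda>n. ennreal (\<integral>x. norm (v n x - psi x) \<partial>nu)) \<longlonglongrightarrow> ennreal 0" unfolding eq by simp
    then show ?thesis by (subst (asm) tendsto_ennreal_iff) auto
  qed
  obtain r :: "nat \<Rightarrow> nat" where r: "strict_mono r" and rc: "AE x in nu. (\<lambda>n. v (r n) x - psi x) \<longlonglongrightarrow> 0"
    using tendsto_L1_AE_subseq[OF vi vt] by blast
  define w where "w n = v (r n)" for n
  have wm[measurable]: "w n \<in> borel_measurable nu" for n unfolding w_def by measurable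
  have conv: "AE x in nu. (\<lambda>n. w n x) \<longlonglongrightarrow> psi x"
    using rc by eventually_elim (simp add: w_def LIM_zero_iff)
  have EW: "nl_energy nu \<epsilon> (w n) \<le> ennreal (K * \<epsilon>) * ennreal S" if "\<epsilon> > 0" for n \<epsilon>
    unfolding w_def v_def by (rule EA[OF that])
  show ?thesis
  proof (rule that[OF S0])
    fix \<epsilon> :: real assume e: "\<epsilon> > 0"
    have inner: "(1 / emeasure nu (ball x \<epsilon>)) * (\<integral>\<^sup>+y\<in>ball x \<epsilon>. ennreal \<bar>psi y - psi x\<bar> \<partial>nu) \<le>
        liminf (\<lambda>n. (1 / emeasure nu (ball x \<epsilon>)) * (\<integral>\<^sup>+y\<in>ball x \<epsilon>. ennreal \<bar>w n y - w n x\<bar> \<partial>nu))"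
      if cx: "(\<lambda>n. w n x) \<longlonglongrightarrow> psi x" for x
    proof -
      define cc where "cc = 1 / emeasure nu (ball x \<epsilon>)"
      have cc: "cc = ennreal (1 / m x \<epsilon>)"
        unfolding cc_def using m_pos[OF e, of x] by (simp add: emeasure_ball divide_ennreal[of 1, symmetric])
      have cct: "cc < top" unfolding cc by simp
      have "cc * (\<integral>\<^sup>+y\<in>ball x \<epsilon>. ennreal \<bar>psi y - psi x\<bar> \<partial>nu) =
          (\<integral>\<^sup>+y. cc * (ennreal \<bar>psi y - psi x\<bar> * indicator (ball x \<epsilon>) y) \<partial>nu)"
        by (rule nn_integral_cmult[symmetric]) measurable
      also have "\<dots> = (\<integral>\<^sup>+y. liminf (\<lambda>n. cc * (ennreal \<bar>w n y - w n x\<bar> * indicator (ball x \<epsilon>) y)) \<partial>nu)"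
      proof (rule nn_integral_cong_AE)
        show "AE y in nu. cc * (ennreal \<bar>psi y - psi x\<bar> * indicator (ball x \<epsilon>) y) =
            liminf (\<lambda>n. cc * (ennreal \<bar>w n y - w n x\<bar> * indicator (ball x \<epsilon>) y))"
          using conv
        proof eventually_elim
          case (elim y)
          have "(\<lambda>n. ennreal \<bar>w n y - w n x\<bar> * indicator (ball x \<epsilon>) y) \<longlonglongrightarrow> ennreal \<bar>psi y - psi x\<bar> * indicator (ball x \<epsilon>) y"
          proof (cases "y \<in> ball x \<epsilon>")
            case True
            have "(\<lambda>n. \<bar>w n y - w n x\<bar>) \<longlonglongrightarrow> \<bar>psi y - psi x\<bar>"
              by (intro tendsto_intros elim cx)
            then show ?thesis using True by simp
          qed simp
          then have "(\<lambda>n. cc * (ennreal \<bar>w n y - w n x\<bar> * indicator (ball x \<epsilon>) y)) \<longlonglongrightarrow>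
              cc * (ennreal \<bar>psi y - psi x\<bar> * indicator (ball x \<epsilon>) y)"
            by (rule ennreal_tendsto_cmult[OF cct])
          then show ?case by (rule lim_imp_Liminf[symmetric, rotated]) simp
        qed
      qed
      also have "\<dots> \<le> liminf (\<lambda>n. \<integral>\<^sup>+y. cc * (ennreal \<bar>w n y - w n x\<bar> * indicator (ball x \<epsilon>) y) \<partial>nu)"
        by (rule nn_integral_liminf) measurable
      also have "\<dots> = liminf (\<lambda>n. cc * (\<integral>\<^sup>+y\<in>ball x \<epsilon>. ennreal \<bar>w n y - w n x\<bar> \<partial>nu))"
        by (intro arg_cong[where f="\<lambda>f. liminf f"] ext nn_integral_cmult) measurable
      finally show ?thesis unfolding cc_def .
    qed
    have "nl_energy nu \<epsilon> psi \<le> (\<integral>\<^sup>+x. liminf (\<lambda>n. (1 / emeasure nu (ball x \<epsilon>)) * (\<integral>\<^sup>+y\<in>ball x \<epsilon>. ennreal \<bar>w n y - w n x\<bar> \<partial>nu)) \<partial>nu)"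
      unfolding nl_energy_def
      apply (rule nn_integral_mono_AE)
      using conv apply eventually_elim
      by (erule inner)
    also have "\<dots> \<le> liminf (\<lambda>n. nl_energy nu \<epsilon> (w n))"
      unfolding nl_energy_def by (rule nn_integral_liminf) measurable
    also have "\<dots> \<le> ennreal (K * \<epsilon>) * ennreal S"
      by (rule Liminf_le) (use EW[OF e] in auto)
    finally show "nl_energy nu \<epsilon> psi \<le> ennreal ((C^3 + C) * C * c * 2 * C^k * \<epsilon>) * ennreal S"
      unfolding K_def .
  qed
qed
end

lemma half_cancel: "(a::ennreal) / 2 \<le> b / 2 \<Longrightarrow> a \<le> b"
proof -
  assume h: "a / 2 \<le> b / 2"
  have t: "(x::ennreal) / 2 * 2 = x" for x
    by (simp add: ennreal_divide_times divide_eq_1_ennreal)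
  have "a / 2 * 2 \<le> b / 2 * 2" by (rule mult_right_mono[OF h]) simp
  then show ?thesis unfolding t .
qed

theorem mainTheorem8:
  fixes nu :: "'a::polish_space measure"
    and \<Omega> :: "'a set"
    and psi :: "'a \<Rightarrow> real"
    and u :: "real \<Rightarrow> 'a \<Rightarrow> real"
  assumes sets_nu: "sets nu = sets borel"
    and finite: "finite_measure nu"
    and doubling: "doubling_measure nu"
    and poincare: "poincare_1 nu"
    and ergodic: "\<And>eps. eps > 0 \<Longrightarrow> rw_ergodic nu eps"
    and Omega_meas: "\<Omega> \<in> sets nu"
    and Omega_bdd: "bounded \<Omega>"
    and Omega_pos: "0 < measure nu \<Omega>"
    and Omega_lt: "measure nu \<Omega> < measure nu (space nu)"
    and psi_BV: "psi \<in> BV_metric nu"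
    and psi_Linf: "psi \<in> Linfty nu"
    and sol: "\<And>eps. eps > 0 \<Longrightarrow> nl_least_gradient nu eps \<Omega> psi (u eps)"
  shows "\<exists>M::real. M \<ge> 0 \<and> (\<exists>epsk :: nat \<Rightarrow> real. (\<forall>k. epsk k > 0) \<and> epsk \<longlonglongrightarrow> 0 \<and>
           (\<forall>k. (\<integral>\<^sup>+ x. (1 / emeasure nu (ball x (epsk k))) *
                   (\<integral>\<^sup>+ y\<in>ball x (epsk k). ennreal \<bar>u (epsk k) y - u (epsk k) x\<bar> \<partial>nu) \<partial>nu)
                 \<le> ennreal (M * epsk k)))"
proof -
  obtain Cd where Cd: "Cd \<ge> 1" and D: "\<And>x r. r > 0 \<Longrightarrow> 0 < emeasure nu (ball x (2*r)) \<and>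
      emeasure nu (ball x (2*r)) \<le> ennreal Cd * emeasure nu (ball x r) \<and> emeasure nu (ball x r) < \<infinity>"
    using doubling unfolding doubling_measure_def by blast
  have dmI: "dm nu Cd"
  proof (rule dm.intro[OF finite], rule dm_axioms.intro)
    show "sets nu = sets borel" by (rule sets_nu)
    show "Cd \<ge> 1" by (rule Cd)
    show "0 < emeasure nu (ball x r)" if "r > 0" for r x
      using D[of "r/2" x] that by simp
    show "emeasure nu (ball x (2*r)) \<le> ennreal Cd * emeasure nu (ball x r)" if "r > 0" for r x
      using D[OF that] by simp
  qed
  interpret dm nu Cd by (rule dmI)
  obtain c lam where c: "c > 0" and lam: "lam \<ge> 1" and P: "\<forall>u x r. (\<exists>L. L-lipschitz_on UNIV u) \<longrightarrow> r > 0 \<longrightarrow>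
      (\<integral>\<^sup>+ y\<in>ball x r. ennreal \<bar>u y - avg nu (ball x r) u\<bar> \<partial>nu)
        \<le> ennreal (c * r) * (\<integral>\<^sup>+ y\<in>ball x (lam * r). slope u y \<partial>nu)"
    using poincare unfolding poincare_1_def by blast
  obtain k where k: "2 * lam < 2^k" using real_arch_pow[of 2 "2*lam"] by auto
  define K where "K = (Cd^3 + Cd) * Cd * c * 2 * Cd^k"
  have K0: "K \<ge> 0" unfolding K_def using Cd c by simp
  obtain S where S0: "S \<ge> 0" and SB: "\<And>\<epsilon>. \<epsilon> > 0 \<Longrightarrow> nl_energy nu \<epsilon> psi \<le> ennreal (K * \<epsilon>) * ennreal S"
    using lemmaB[OF P c lam less_imp_le[OF k] psi_BV] unfolding K_def by blast
  have psim: "psi \<in> borel_measurable nu"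
    using psi_BV unfolding BV_metric_def by (auto intro: borel_measurable_integrable)
  have main: "nl_energy nu \<epsilon> (u \<epsilon>) \<le> ennreal (K * S * \<epsilon>)" if e: "\<epsilon> > 0" for \<epsilon>
  proof -
    have psiBV: "psi \<in> BV_rw nu \<epsilon>"
    proof -
      have "ennreal (K * \<epsilon>) * ennreal S < \<infinity>" by (simp add: ennreal_mult_less_top)
      then have "nl_energy nu \<epsilon> psi < \<infinity>" using SB[OF e] by (rule le_less_trans[rotated])
      then show ?thesis unfolding BV_rw_def using psim by simp
    qed
    have "TV_rw nu \<epsilon> (u \<epsilon>) \<le> TV_rw nu \<epsilon> psi"
      using sol[OF e] psiBV unfolding nl_least_gradient_def by auto
    then have "nl_energy nu \<epsilon> (u \<epsilon>) \<le> nl_energy nu \<epsilon> psi"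
      unfolding TV_rw_def by (rule half_cancel)
    also have "\<dots> \<le> ennreal (K * \<epsilon>) * ennreal S" by (rule SB[OF e])
    also have "\<dots> = ennreal (K * S * \<epsilon>)" using K0 S0 e by (simp add: ennreal_mult[symmetric] mult_ac)
    finally show ?thesis .
  qed
  define epsk where "epsk n = inverse (real (Suc n))" for n
  show ?thesis
  proof (intro exI conjI allI)
    show "0 \<le> K * S" using K0 S0 by simp
    show "epsk n > 0" for n unfolding epsk_def by simp
    show "epsk \<longlonglongrightarrow> 0" unfolding epsk_def by (rule LIMSEQ_inverse_real_of_nat)
    show "(\<integral>\<^sup>+ x. (1 / emeasure nu (ball x (epsk n))) *
                   (\<integral>\<^sup>+ y\<in>ball x (epsk n). ennreal \<bar>u (epsk n) y - u (epsk n) x\<bar> \<partial>nu) \<partial>nu)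
                 \<le> ennreal (K * S * epsk n)" for n
      using main[of "epsk n"] unfolding nl_energy_def epsk_def by simp
  qed
qed

end
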